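(* Let $p,q$ be nonzero integers such that $q$ does not divide $2p$. Then the group $G_{p,q}=\langle a,b,s,t\mid [a,b],\ s^{-1}a^qs=a^pb,\ t^{-1}a^qt=a^pb^{-1}\rangle$ is not residually finite. *)

theory Defs
  imports "HOL-Algebra.Algebra"
begin

datatype gen = GA | GB | GS | GT

text \<open>A letter is a generator together with a flag; True means the inverse of the generator.\<close>
type_synonym letter = "gen \<times> bool"

fun inv_letter :: "letter \<Rightarrow> letter" where
  "inv_letter (g, e) = (g, \<not> e)"

fun push :: "letter \<Rightarrow> letter list \<Rightarrow> letter list" where
  "push x [] = [x]"
| "push x (y # ys) = (if y = inv_letter x then ys else x # y # ys)"

definition reduce :: "letter list \<Rightarrow> letter list" where
  "reduce w = foldr push w []"

definition reduced :: "letter list \<Rightarrow> bool" where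
  "reduced w \<longleftrightarrow> (\<forall>i. Suc i < length w \<longrightarrow> w ! Suc i \<noteq> inv_letter (w ! i))"

definition free_grp :: "letter list monoid" where
  "free_grp = \<lparr>carrier = {w. reduced w}, monoid.mult = (\<lambda>x y. reduce (x @ y)), one = []\<rparr>"

definition inv_word :: "letter list \<Rightarrow> letter list" where
  "inv_word w = rev (map inv_letter w)"

definition gpow :: "gen \<Rightarrow> int \<Rightarrow> letter list" where
  "gpow g k = (if 0 \<le> k then replicate (nat k) (g, False) else replicate (nat (- k)) (g, True))"

definition relators :: "int \<Rightarrow> int \<Rightarrow> letter list set" where
  "relators p q =
    { reduce [(GA, True), (GB, True), (GA, False), (GB, False)],
      reduce ([(GS, True)] @ gpow GA q @ [(GS, False)] @ inv_word (gpow GA p @ [(GB, False)])),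
      reduce ([(GT, True)] @ gpow GA q @ [(GT, False)] @ inv_word (gpow GA p @ [(GB, True)])) }"

definition normal_closure :: "('a, 'b) monoid_scheme \<Rightarrow> 'a set \<Rightarrow> 'a set" where
  "normal_closure G R =
     generate G (\<Union>g\<in>carrier G. (\<lambda>r. g \<otimes>\<^bsub>G\<^esub> r \<otimes>\<^bsub>G\<^esub> inv\<^bsub>G\<^esub> g) ` R)"

definition G_pq :: "int \<Rightarrow> int \<Rightarrow> letter list set monoid" where
  "G_pq p q = free_grp Mod normal_closure free_grp (relators p q)"

definition residually_finite :: "('a, 'b) monoid_scheme \<Rightarrow> bool" where
  "residually_finite G \<longleftrightarrow>
     (\<forall>x\<in>carrier G. x \<noteq> \<one>\<^bsub>G\<^esub> \<longrightarrow>
        (\<exists>N. N \<lhd> G \<and> finite (rcosets\<^bsub>G\<^esub> N) \<and> x \<notin> N))"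

end

theory Submission
  imports Defs
begin

section \<open>Free group facts\<close>

lemma inv_letter_inv [simp]: "inv_letter (inv_letter x) = x"
  by (cases x) auto

lemma reduced_Nil [simp]: "reduced []" and reduced_single [simp]: "reduced [x]"
  by (auto simp: reduced_def)

lemma reduced_Cons: "reduced (x # y # ys) \<longleftrightarrow> y \<noteq> inv_letter x \<and> reduced (y # ys)"
proof
  assume "reduced (x # y # ys)"
  then show "y \<noteq> inv_letter x \<and> reduced (y # ys)"
    unfolding reduced_def
    by (metis Suc_less_eq length_Cons nth_Cons_0 nth_Cons_Suc zero_less_Suc)
next
  assume a: "y \<noteq> inv_letter x \<and> reduced (y # ys)"
  show "reduced (x # y # ys)"
    unfolding reduced_def
  proof (intro allI impI)
    fix i assume "Suc i < length (x # y # ys)"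
    then show "(x # y # ys) ! Suc i \<noteq> inv_letter ((x # y # ys) ! i)"
      using a unfolding reduced_def by (cases i) auto
  qed
qed

lemma reduced_tl: "reduced (x # ys) \<Longrightarrow> reduced ys"
  by (cases ys) (auto simp: reduced_Cons)

lemma reduced_push: "reduced w \<Longrightarrow> reduced (push x w)"
  by (cases w) (auto simp: reduced_Cons dest: reduced_tl)

lemma reduced_foldr: "reduced z \<Longrightarrow> reduced (foldr push w z)"
  by (induction w) (auto intro: reduced_push)

lemma reduced_reduce [simp]: "reduced (reduce w)"
  unfolding reduce_def by (rule reduced_foldr) simp

lemma push_cancel: "reduced w \<Longrightarrow> push (inv_letter x) (push x w) = w"
proof (cases w)
  case Nil then show ?thesis by simp
next
  case (Cons y ys)
  assume r: "reduced w"
  show ?thesis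
  proof (cases "y = inv_letter x")
    case True
    then show ?thesis using Cons r
      by (cases ys) (auto simp: reduced_Cons)
  next
    case False
    then show ?thesis using Cons by simp
  qed
qed

lemma foldr_push_push:
  assumes "reduced w" "reduced z"
  shows "foldr push (push x w) z = push x (foldr push w z)"
proof (cases w)
  case Nil then show ?thesis by simp
next
  case (Cons y ys)
  show ?thesis
  proof (cases "y = inv_letter x")
    case True
    have "reduced (foldr push ys z)" using assms(2) by (rule reduced_foldr)
    then have "push x (push y (foldr push ys z)) = foldr push ys z"
      using True push_cancel[of _ y] by simp
    then show ?thesis using Cons True by simp
  next
    case False
    then show ?thesis using Cons by simp
  qed
qed

lemma reduce_Cons: "reduce (x # w) = push x (reduce w)"
  by (simp add: reduce_def)

lemma foldr_reduce: "reduced z \<Longrightarrow> foldr push (reduce x) z = foldr push x z"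
proof (induction x)
  case Nil then show ?case by (simp add: reduce_def)
next
  case (Cons a x)
  then show ?case by (simp add: reduce_Cons foldr_push_push)
qed

lemma reduce_append: "reduce (x @ y) = foldr push x (reduce y)"
  by (simp add: reduce_def)

lemma reduce_reduced: "reduced w \<Longrightarrow> reduce w = w"
proof (induction w)
  case Nil then show ?case by (simp add: reduce_def)
next
  case (Cons x xs)
  then have "reduce xs = xs" using reduced_tl by blast
  then show ?case using Cons.prems by (cases xs) (auto simp: reduce_Cons reduced_Cons)
qed

lemma reduce_reduce_left: "reduce (reduce x @ y) = reduce (x @ y)"
  by (simp add: reduce_append foldr_reduce)

lemma reduce_reduce_right: "reduce (x @ reduce y) = reduce (x @ y)"
  by (simp add: reduce_append reduce_reduced)

lemma foldr_inv_word: "reduced z \<Longrightarrow> foldr push (inv_word w) (foldr push w z) = z"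
proof (induction w)
  case Nil then show ?case by (simp add: inv_word_def)
next
  case (Cons x xs)
  have "reduced (foldr push xs z)" using Cons.prems by (rule reduced_foldr)
  then show ?case using Cons by (simp add: inv_word_def push_cancel)
qed

lemma reduce_inv_word_left: "reduce (inv_word w @ w) = []"
  by (metis foldr_inv_word reduce_append reduce_def reduced_Nil)

lemma inv_word_inv_word [simp]: "inv_word (inv_word w) = w"
  by (simp add: inv_word_def rev_map comp_def)

lemma reduce_inv_word_right: "reduce (w @ inv_word w) = []"
  using reduce_inv_word_left[of "inv_word w"] by simp

lemma free_carrier: "carrier free_grp = {w. reduced w}"
  and free_mult: "x \<otimes>\<^bsub>free_grp\<^esub> y = reduce (x @ y)"
  and free_one: "\<one>\<^bsub>free_grp\<^esub> = []"
  by (simp_all add: free_grp_def)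

lemma group_free: "group free_grp"
proof (rule groupI)
  fix x y z
  show "x \<otimes>\<^bsub>free_grp\<^esub> y \<otimes>\<^bsub>free_grp\<^esub> z = x \<otimes>\<^bsub>free_grp\<^esub> (y \<otimes>\<^bsub>free_grp\<^esub> z)"
    by (simp add: free_mult reduce_reduce_left reduce_reduce_right)
next
  fix x y show "x \<otimes>\<^bsub>free_grp\<^esub> y \<in> carrier free_grp" by (simp add: free_mult free_carrier)
next
  show "\<one>\<^bsub>free_grp\<^esub> \<in> carrier free_grp" by (simp add: free_one free_carrier)
next
  fix x assume "x \<in> carrier free_grp"
  then show "\<one>\<^bsub>free_grp\<^esub> \<otimes>\<^bsub>free_grp\<^esub> x = x"
    by (simp add: free_one free_mult free_carrier reduce_reduced)
next
  fix x assume "x \<in> carrier free_grp"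
  show "\<exists>y\<in>carrier free_grp. y \<otimes>\<^bsub>free_grp\<^esub> x = \<one>\<^bsub>free_grp\<^esub>"
    by (rule bexI[of _ "reduce (inv_word x)"])
       (simp_all add: free_one free_mult free_carrier reduce_reduce_left reduce_inv_word_left)
qed

lemma free_inv: "reduced x \<Longrightarrow> inv\<^bsub>free_grp\<^esub> x = reduce (inv_word x)"
  by (rule group.inv_equality[OF group_free])
     (simp_all add: free_one free_mult free_carrier reduce_reduce_left reduce_inv_word_left)

section \<open>A permutation representation\<close>

definition Sm :: "int \<Rightarrow> int \<Rightarrow> int \<times> int \<Rightarrow> int \<times> int" where
  "Sm p q v = ((fst v - p * snd v) mod \<bar>q\<bar> + q * snd v, (fst v - p * snd v) div \<bar>q\<bar>)"

lemma Sm_shift: "Sm p q (x + p * k, y + k) = (fst (Sm p q (x, y)) + q * k, snd (Sm p q (x, y)))"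
  by (simp add: Sm_def algebra_simps)

lemma Sm_inj:
  assumes "q \<noteq> 0" shows "inj (Sm p q)"
proof (rule injI)
  fix v w assume e: "Sm p q v = Sm p q w"
  obtain x y where v: "v = (x, y)" by (cases v)
  obtain x' y' where w: "w = (x', y')" by (cases w)
  define c where "c = x - p * y"
  define c' where "c' = x' - p * y'"
  have e1: "c mod \<bar>q\<bar> + q * y = c' mod \<bar>q\<bar> + q * y'" and e2: "c div \<bar>q\<bar> = c' div \<bar>q\<bar>"
    using e by (simp_all add: Sm_def v w c_def c'_def)
  have "(c mod \<bar>q\<bar> + q * y) mod \<bar>q\<bar> = c mod \<bar>q\<bar>"
    by (simp add: mod_add_right_eq[symmetric])
  moreover have "(c' mod \<bar>q\<bar> + q * y') mod \<bar>q\<bar> = c' mod \<bar>q\<bar>"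
    by (simp add: mod_add_right_eq[symmetric])
  ultimately have m: "c mod \<bar>q\<bar> = c' mod \<bar>q\<bar>" using e1 by simp
  then have "q * y = q * y'" using e1 by simp
  then have yy: "y = y'" using assms by simp
  have "c = c div \<bar>q\<bar> * \<bar>q\<bar> + c mod \<bar>q\<bar>" by simp
  also have "\<dots> = c' div \<bar>q\<bar> * \<bar>q\<bar> + c' mod \<bar>q\<bar>" using m e2 by simp
  also have "\<dots> = c'" by simp
  finally have "c = c'" .
  then show "v = w" using yy v w c_def c'_def by simp
qed

lemma Sm_surj:
  assumes "q \<noteq> 0" shows "surj (Sm p q)"
proof -
  have "z \<in> range (Sm p q)" for z
  proof -
    obtain u w where z: "z = (u, w)" by (cases z)
    define r where "r = u mod \<bar>q\<bar>"
    define y where "y = sgn q * (u div \<bar>q\<bar>)"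
    have "u - r = \<bar>q\<bar> * (u div \<bar>q\<bar>)" unfolding r_def by (simp add: minus_mod_eq_mult_div)
    moreover have "q * sgn q = \<bar>q\<bar>" by (simp add: abs_sgn)
    ultimately have y: "u - r = q * y" unfolding y_def by (simp add: mult.assoc[symmetric])
    define c where "c = w * \<bar>q\<bar> + r"
    have q0: "\<bar>q\<bar> > 0" using assms by simp
    have r0: "0 \<le> r" "r < \<bar>q\<bar>" using q0 by (simp_all add: r_def)
    have cm: "c mod \<bar>q\<bar> = r" unfolding c_def using r0 by simp
    have cd: "c div \<bar>q\<bar> = w" unfolding c_def using r0 q0 by simp
    have "Sm p q (c + p * y, y) = z"
      using cm cd y by (simp add: Sm_def z)
    then show ?thesis by (metis rangeI)
  qed
  then show ?thesis by blast
qed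

lemma Sm_bij: "q \<noteq> 0 \<Longrightarrow> bij (Sm p q)"
  by (simp add: bij_def Sm_inj Sm_surj)

fun lp :: "int \<Rightarrow> int \<Rightarrow> letter \<Rightarrow> int \<times> int \<Rightarrow> int \<times> int" where
  "lp p q (GA, e) = (\<lambda>(x, y). (if e then x - 1 else x + 1, y))"
| "lp p q (GB, e) = (\<lambda>(x, y). (x, if e then y - 1 else y + 1))"
| "lp p q (GS, e) = (if e then inv_into UNIV (Sm p q) else Sm p q)"
| "lp p q (GT, e) = (if e then inv_into UNIV (Sm (-p) (-q)) else Sm (-p) (-q))"

lemma lp_inv0:
  assumes "q \<noteq> 0" shows "lp p q (inv_letter (g, e)) \<circ> lp p q (g, e) = id"
proof -
  have b1: "bij (Sm p q)" and b2: "bij (Sm (-p) (-q))" using assms by (simp_all add: Sm_bij)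
  have i1: "inj (Sm p q)" "surj (Sm p q)" "inj (Sm (-p) (-q))" "surj (Sm (-p) (-q))"
    using b1 b2 by (simp_all add: bij_is_inj bij_is_surj)
  show ?thesis
  proof (cases g)
    case GA then show ?thesis by (cases e) (auto simp: fun_eq_iff)
  next
    case GB then show ?thesis by (cases e) (auto simp: fun_eq_iff)
  next
    case GS then show ?thesis using i1 by (cases e) (auto simp: fun_eq_iff surj_f_inv_f inv_into_f_f)
  next
    case GT then show ?thesis using i1 by (cases e) (auto simp: fun_eq_iff surj_f_inv_f inv_into_f_f)
  qed
qed

lemma lp_inv: "q \<noteq> 0 \<Longrightarrow> lp p q (inv_letter l) \<circ> lp p q l = id"
  using lp_inv0 by (cases l) auto

lemma lp_inv': "q \<noteq> 0 \<Longrightarrow> lp p q l \<circ> lp p q (inv_letter l) = id"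
  using lp_inv[of q p "inv_letter l"] by simp

definition ev :: "int \<Rightarrow> int \<Rightarrow> letter list \<Rightarrow> int \<times> int \<Rightarrow> int \<times> int" where
  "ev p q w = foldr (\<lambda>l f. lp p q l \<circ> f) w id"

lemma ev_Nil [simp]: "ev p q [] = id" and ev_Cons [simp]: "ev p q (l # w) = lp p q l \<circ> ev p q w"
  by (simp_all add: ev_def)

lemma ev_append [simp]: "ev p q (u @ w) = ev p q u \<circ> ev p q w"
  by (induction u) auto

lemma ev_push: "q \<noteq> 0 \<Longrightarrow> ev p q (push x w) = lp p q x \<circ> ev p q w"
proof (cases w)
  case (Cons y ys)
  assume q: "q \<noteq> 0"
  show ?thesis
  proof (cases "y = inv_letter x")
    case True
    have "lp p q x \<circ> (lp p q y \<circ> ev p q ys) = ev p q ys"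
      using lp_inv'[OF q, of p x] True by (simp add: comp_assoc[symmetric])
    then show ?thesis using Cons True by simp
  qed (simp add: Cons)
qed simp

lemma ev_reduce: "q \<noteq> 0 \<Longrightarrow> ev p q (reduce w) = ev p q w"
  by (induction w) (auto simp: reduce_Cons ev_push reduce_def)

lemma ev_gpow: "ev p q (gpow GA k) = (\<lambda>(x, y). (x + k, y))"
proof -
  have "ev p q (replicate n (GA, e)) = (\<lambda>(x, y). (if e then x - int n else x + int n, y))" for n e
    by (induction n) (auto simp: fun_eq_iff)
  then show ?thesis by (auto simp: gpow_def fun_eq_iff)
qed

lemma ev_inv_word_cancel:
  assumes "q \<noteq> 0" "ev p q P = ev p q Y"
  shows "ev p q (reduce (P @ inv_word Y)) = id"
proof -
  have "ev p q (reduce (P @ inv_word Y)) = ev p q (Y @ inv_word Y)"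
    using assms by (simp add: ev_reduce)
  also have "\<dots> = ev p q (reduce (Y @ inv_word Y))" using assms by (simp add: ev_reduce)
  also have "\<dots> = id" by (simp add: reduce_inv_word_right)
  finally show ?thesis .
qed

lemma rel2:
  assumes "q \<noteq> 0"
  shows "ev p q ([(GS, True)] @ gpow GA q @ [(GS, False)]) = ev p q (gpow GA p @ [(GB, False)])"
proof -
  have inj: "inj (Sm p q)" using assms Sm_inj by blast
  have "inv_into UNIV (Sm p q) (fst (Sm p q (x, y)) + q, snd (Sm p q (x, y))) = (x + p, y + 1)" for x y
  proof -
    have "Sm p q (x + p * 1, y + 1) = (fst (Sm p q (x, y)) + q * 1, snd (Sm p q (x, y)))"
      by (rule Sm_shift)
    then have "(fst (Sm p q (x, y)) + q, snd (Sm p q (x, y))) = Sm p q (x + p, y + 1)" by simp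
    then show ?thesis using inj by (simp add: inv_into_f_f)
  qed
  note h = this
  show ?thesis
  proof (rule ext)
    fix v show "ev p q ([(GS, True)] @ gpow GA q @ [(GS, False)]) v = ev p q (gpow GA p @ [(GB, False)]) v"
      using h by (cases v) (simp add: ev_gpow prod.case_eq_if)
  qed
qed

lemma rel3:
  assumes "q \<noteq> 0"
  shows "ev p q ([(GT, True)] @ gpow GA q @ [(GT, False)]) = ev p q (gpow GA p @ [(GB, True)])"
proof -
  have inj: "inj (Sm (-p) (-q))" using assms Sm_inj by simp
  have "inv_into UNIV (Sm (-p) (-q)) (fst (Sm (-p) (-q) (x, y)) + q, snd (Sm (-p) (-q) (x, y))) = (x + p, y - 1)" for x y
  proof -
    have "Sm (-p) (-q) (x + (-p) * (-1), y + (-1)) = (fst (Sm (-p) (-q) (x, y)) + (-q) * (-1), snd (Sm (-p) (-q) (x, y)))"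
      by (rule Sm_shift)
    then have "(fst (Sm (-p) (-q) (x, y)) + q, snd (Sm (-p) (-q) (x, y))) = Sm (-p) (-q) (x + p, y - 1)" by simp
    then show ?thesis using inj by (simp add: inv_into_f_f)
  qed
  note h = this
  show ?thesis
  proof (rule ext)
    fix v show "ev p q ([(GT, True)] @ gpow GA q @ [(GT, False)]) v = ev p q (gpow GA p @ [(GB, True)]) v"
      using h by (cases v) (simp add: ev_gpow prod.case_eq_if)
  qed
qed

lemma ev_relators:
  assumes "q \<noteq> 0" "r \<in> relators p q"
  shows "ev p q r = id"
proof -
  have r1: "ev p q (reduce [(GA, True), (GB, True), (GA, False), (GB, False)]) = id"
    using assms(1) by (auto simp: ev_reduce fun_eq_iff)
  have r2: "ev p q (reduce ([(GS, True)] @ gpow GA q @ [(GS, False)] @ inv_word (gpow GA p @ [(GB, False)]))) = id"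
    using ev_inv_word_cancel[OF assms(1) rel2[OF assms(1)]] by simp
  have r3: "ev p q (reduce ([(GT, True)] @ gpow GA q @ [(GT, False)] @ inv_word (gpow GA p @ [(GB, True)]))) = id"
    using ev_inv_word_cancel[OF assms(1) rel3[OF assms(1)]] by simp
  show ?thesis using assms(2) r1 r2 r3 unfolding relators_def by auto
qed

definition u0 :: "int \<Rightarrow> letter list" where
  "u0 g = [(GS, True)] @ gpow GA g @ [(GS, False), (GA, False), (GS, True)] @ gpow GA (-g)
          @ [(GS, False), (GA, True)]"

lemma Sm_small: "0 \<le> a \<Longrightarrow> a < \<bar>q\<bar> \<Longrightarrow> Sm p q (a, 0) = (a, 0)"
  by (simp add: Sm_def)

lemma ev_u0:
  assumes q: "q \<noteq> 0" and g: "0 < g" "g < \<bar>q\<bar>"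
  shows "ev p q (u0 g) \<noteq> id"
proof
  assume e: "ev p q (u0 g) = id"
  define Q where "Q = \<bar>q\<bar>"
  have inj: "inj (Sm p q)" using q Sm_inj by blast
  have s1: "Sm p q (Q - 1, 0) = (Q - 1, 0)" using g unfolding Q_def by (intro Sm_small) auto
  have s2: "Sm p q (Q - 1 - g, 0) = (Q - 1 - g, 0)" using g unfolding Q_def by (intro Sm_small) auto
  have s3: "Sm p q (Q - g, 0) = (Q - g, 0)" using g unfolding Q_def by (intro Sm_small) auto
  have s4: "Sm p q (p * sgn q, sgn q) = (Q, 0)" unfolding Q_def
    by (simp add: Sm_def abs_sgn mult.commute)
  have i2: "inv_into UNIV (Sm p q) (Q - 1 - g, 0) = (Q - 1 - g, 0)"
    using s2 inj by (metis inv_into_f_f UNIV_I)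
  have i4: "inv_into UNIV (Sm p q) (Q, 0) = (p * sgn q, sgn q)"
    using s4 inj by (metis inv_into_f_f UNIV_I)
  have "ev p q (u0 g) (Q, 0) = (p * sgn q, sgn q)"
    unfolding u0_def using s1 s3 i2 i4
    by (simp add: ev_gpow algebra_simps)
  moreover have "ev p q (u0 g) (Q, 0) = (Q, 0)" using e by simp
  ultimately show False using q by (simp add: sgn_0_0)
qed

section \<open>Finite groups\<close>

lemma (in group) comm_inv:
  assumes "a \<otimes> y = y \<otimes> a" "a \<in> carrier G" "y \<in> carrier G"
  shows "inv a \<otimes> y = y \<otimes> inv a"
proof -
  have "inv a \<otimes> y \<otimes> a = inv a \<otimes> (y \<otimes> a)" using assms(2,3) by (simp add: m_assoc)
  also have "\<dots> = inv a \<otimes> (a \<otimes> y)" by (simp only: assms(1))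
  also have "\<dots> = y" using assms(2,3) by (simp add: m_assoc[symmetric])
  finally have "inv a \<otimes> y \<otimes> a = y" .
  then show ?thesis using inv_solve_right[of "inv a \<otimes> y" y a] assms(2,3) by auto
qed

lemma (in group) comm_int_pow:
  assumes "x \<otimes> y = y \<otimes> x" "x \<in> carrier G" "y \<in> carrier G"
  shows "x [^] (i::int) \<otimes> y = y \<otimes> x [^] i"
proof (cases "0 \<le> i")
  case True
  then have eq: "x [^] i = x [^] (nat i)" using int_pow_int[of G x "nat i"] by simp
  show ?thesis unfolding eq by (rule group_commutes_pow[OF assms])
next
  case False
  then have eq: "x [^] i = inv (x [^] (nat (- i)))" using int_pow_neg_int[OF assms(2), of "nat (- i)"] by simp
  show ?thesis unfolding eq
    by (rule comm_inv[OF group_commutes_pow[OF assms] nat_pow_closed[OF assms(2)] assms(3)])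
qed

lemma (in group) comm_int_pow2:
  assumes "x \<otimes> y = y \<otimes> x" "x \<in> carrier G" "y \<in> carrier G"
  shows "x [^] (i::int) \<otimes> y [^] (j::int) = y [^] j \<otimes> x [^] i"
proof -
  have h1: "y [^] j \<otimes> x = x \<otimes> y [^] j"
    by (rule comm_int_pow[OF assms(1)[symmetric] assms(3,2)])
  show ?thesis by (rule comm_int_pow[OF h1[symmetric] assms(2) int_pow_closed[OF assms(3)]])
qed

context group
begin

definition EE :: "'a \<Rightarrow> 'a \<Rightarrow> int \<Rightarrow> int \<Rightarrow> 'a" where
  "EE x y i j = x [^] i \<otimes> y [^] j"

lemma EE_closed: "x \<in> carrier G \<Longrightarrow> y \<in> carrier G \<Longrightarrow> EE x y i j \<in> carrier G"
  by (simp add: EE_def)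

lemma EE_mult:
  assumes "x \<otimes> y = y \<otimes> x" "x \<in> carrier G" "y \<in> carrier G"
  shows "EE x y i j \<otimes> EE x y k l = EE x y (i + k) (j + l)"
proof -
  have "EE x y i j \<otimes> EE x y k l = x [^] i \<otimes> (y [^] j \<otimes> x [^] k) \<otimes> y [^] l"
    using assms by (simp add: EE_def m_assoc)
  also have "\<dots> = x [^] i \<otimes> (x [^] k \<otimes> y [^] j) \<otimes> y [^] l"
    using comm_int_pow2[OF assms, of k j] by simp
  also have "\<dots> = EE x y (i + k) (j + l)"
    using assms by (simp add: EE_def m_assoc int_pow_mult)
  finally show ?thesis .
qed

lemma EE_comm:
  assumes "x \<otimes> y = y \<otimes> x" "x \<in> carrier G" "y \<in> carrier G"
  shows "EE x y i j \<otimes> EE x y k l = EE x y k l \<otimes> EE x y i j"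
  using EE_mult[OF assms] by (simp add: add.commute)

lemma EE_pow:
  assumes "x \<otimes> y = y \<otimes> x" "x \<in> carrier G" "y \<in> carrier G"
  shows "(EE x y i j) [^] (n::int) = EE x y (i * n) (j * n)"
proof -
  have "(EE x y i j) [^] n = (x [^] i) [^] n \<otimes> (y [^] j) [^] n"
    unfolding EE_def using assms comm_int_pow2[OF assms, of i j]
    by (intro int_pow_mult_distrib) auto
  then show ?thesis using assms by (simp add: EE_def int_pow_pow)
qed

lemma conj_pow:
  assumes "s \<in> carrier G" "z \<in> carrier G"
  shows "(inv s \<otimes> z \<otimes> s) [^] (n::int) = inv s \<otimes> z [^] n \<otimes> s"
proof -
  have h: "(\<lambda>z. inv s \<otimes> z \<otimes> s) \<in> hom G G"
  proof (rule homI)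
    fix x y assume "x \<in> carrier G" "y \<in> carrier G"
    moreover have "s \<otimes> (inv s \<otimes> w) = w" if "w \<in> carrier G" for w
      using assms that by (simp add: m_assoc[symmetric])
    ultimately show "inv s \<otimes> (x \<otimes> y) \<otimes> s = inv s \<otimes> x \<otimes> s \<otimes> (inv s \<otimes> y \<otimes> s)"
      using assms by (simp add: m_assoc)
  qed (use assms in simp)
  show ?thesis by (rule hom_int_pow[OF h assms(2) is_group is_group, symmetric])
qed

lemma fin_key:
  fixes p q :: int
  assumes fin: "finite (carrier G)"
    and c: "\<alpha> \<in> carrier G" "\<beta> \<in> carrier G" "\<sigma> \<in> carrier G" "\<tau> \<in> carrier G"
    and ab: "\<alpha> \<otimes> \<beta> = \<beta> \<otimes> \<alpha>"
    and r2: "inv \<sigma> \<otimes> \<alpha> [^] q \<otimes> \<sigma> = \<alpha> [^] p \<otimes> \<beta>"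
    and r3: "inv \<tau> \<otimes> \<alpha> [^] q \<otimes> \<tau> = \<alpha> [^] p \<otimes> inv \<beta>"
  shows "(inv \<sigma> \<otimes> \<alpha> [^] (gcd q (2 * p)) \<otimes> \<sigma>) \<otimes> \<alpha> = \<alpha> \<otimes> (inv \<sigma> \<otimes> \<alpha> [^] (gcd q (2 * p)) \<otimes> \<sigma>)"
proof -
  define m where "m = int (ord \<alpha>)"
  have m1: "m \<ge> 1" using ord_ge_1[OF fin c(1)] unfolding m_def by simp
  define d where "d = gcd m q"
  have d0: "d > 0" using m1 unfolding d_def by simp
  define n where "n = m div d"
  have mdn: "m = d * n" unfolding n_def d_def by simp
  have "0 < d * n" using mdn m1 by simp
  then have n0: "n > 0" using d0 zero_less_mult_pos by blast
  have pow_m: "\<alpha> [^] (m * k) = \<one>" for k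
    using int_pow_eq_id[OF c(1), of "m * k"] unfolding m_def by simp
  have E1: "\<alpha> [^] p \<otimes> \<beta> = EE \<alpha> \<beta> p 1" using c by (simp add: EE_def)
  have E2: "\<alpha> [^] p \<otimes> inv \<beta> = EE \<alpha> \<beta> p (-1)" using c by (simp add: EE_def int_pow_neg)
  have qn: "\<alpha> [^] (q * n) = \<one>"
  proof -
    have qd: "q = d * (q div d)" unfolding d_def by simp
    have "q * n = m * (q div d)" using mdn by (subst qd) (simp add: algebra_simps)
    then show ?thesis using pow_m by simp
  qed
  have "(EE \<alpha> \<beta> p 1) [^] n = (inv \<sigma> \<otimes> \<alpha> [^] q \<otimes> \<sigma>) [^] n"
    by (simp only: r2 E1)
  also have "\<dots> = inv \<sigma> \<otimes> (\<alpha> [^] q) [^] n \<otimes> \<sigma>"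
    by (rule conj_pow[OF c(3)]) (use c in simp)
  also have "(\<alpha> [^] q) [^] n = \<one>" using qn int_pow_pow[OF c(1)] by simp
  finally have "(EE \<alpha> \<beta> p 1) [^] n = \<one>" using c by simp
  then have A1: "EE \<alpha> \<beta> (p * n) n = \<one>" using EE_pow[OF ab c(1,2)] by simp
  have "(EE \<alpha> \<beta> p (-1)) [^] n = (inv \<tau> \<otimes> \<alpha> [^] q \<otimes> \<tau>) [^] n"
    by (simp only: r3 E2)
  also have "\<dots> = inv \<tau> \<otimes> (\<alpha> [^] q) [^] n \<otimes> \<tau>"
    by (rule conj_pow[OF c(4)]) (use c in simp)
  also have "(\<alpha> [^] q) [^] n = \<one>" using qn int_pow_pow[OF c(1)] by simp
  finally have "(EE \<alpha> \<beta> p (-1)) [^] n = \<one>" using c by simp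
  then have A2: "EE \<alpha> \<beta> (p * n) (- n) = \<one>" using EE_pow[OF ab c(1,2)] by simp
  have "EE \<alpha> \<beta> (p * n + p * n) (n + - n) = \<one>"
    using EE_mult[OF ab c(1,2), of "p * n" n "p * n" "- n", symmetric] A1 A2 by simp
  then have "\<alpha> [^] (2 * p * n) = \<one>" using c by (simp add: EE_def algebra_simps)
  then have dv1: "m dvd 2 * p * n" using int_pow_eq_id[OF c(1)] unfolding m_def by simp
  have dv2: "m dvd q * n" using qn int_pow_eq_id[OF c(1)] unfolding m_def by simp
  define g where "g = gcd q (2 * p)"
  obtain u v where uv: "u * q + v * (2 * p) = g" unfolding g_def using bezout_int by blast
  have "m dvd g * n"
  proof -
    have "g * n = (u * q + v * (2 * p)) * n" using uv by simp
    also have "\<dots> = u * (q * n) + v * (2 * p * n)" by (simp add: algebra_simps)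
    finally have "g * n = u * (q * n) + v * (2 * p * n)" .
    then show ?thesis using dv1 dv2 by simp
  qed
  then have "d * n dvd g * n" using mdn by simp
  then have "d dvd g" using n0 by simp
  then obtain k where k: "g = d * k" by blast
  obtain u' v' where uv': "u' * m + v' * q = d" unfolding d_def using bezout_int by blast
  have ag: "\<alpha> [^] g = (\<alpha> [^] q) [^] (v' * k)"
  proof -
    have e: "g = m * (u' * k) + q * (v' * k)" using k uv'[symmetric] by (simp add: algebra_simps)
    have "\<alpha> [^] g = \<alpha> [^] (m * (u' * k)) \<otimes> \<alpha> [^] (q * (v' * k))"
      unfolding e by (rule int_pow_mult[OF c(1)])
    also have "\<dots> = \<alpha> [^] (q * (v' * k))" using pow_m[of "u' * k"] c(1) by simp
    also have "\<dots> = (\<alpha> [^] q) [^] (v' * k)" by (rule int_pow_pow[OF c(1), symmetric])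
    finally show ?thesis .
  qed
  have "inv \<sigma> \<otimes> \<alpha> [^] g \<otimes> \<sigma> = inv \<sigma> \<otimes> (\<alpha> [^] q) [^] (v' * k) \<otimes> \<sigma>"
    by (simp only: ag)
  also have "\<dots> = (inv \<sigma> \<otimes> \<alpha> [^] q \<otimes> \<sigma>) [^] (v' * k)"
    by (rule conj_pow[OF c(3), symmetric]) (use c in simp)
  also have "\<dots> = (EE \<alpha> \<beta> p 1) [^] (v' * k)" by (simp only: r2 E1)
  also have "\<dots> = EE \<alpha> \<beta> (p * (v' * k)) (v' * k)" using EE_pow[OF ab c(1,2)] by simp
  finally have cg: "inv \<sigma> \<otimes> \<alpha> [^] g \<otimes> \<sigma> = EE \<alpha> \<beta> (p * (v' * k)) (v' * k)" .
  have a1: "\<alpha> = EE \<alpha> \<beta> 1 0" using c by (simp add: EE_def)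
  have "EE \<alpha> \<beta> (p * (v' * k)) (v' * k) \<otimes> EE \<alpha> \<beta> 1 0 = EE \<alpha> \<beta> 1 0 \<otimes> EE \<alpha> \<beta> (p * (v' * k)) (v' * k)"
    by (rule EE_comm[OF ab c(1,2)])
  then show ?thesis unfolding g_def[symmetric] cg by (simp only: a1[symmetric])
qed

end

section \<open>The normal closure\<close>

definition Hc :: "int \<Rightarrow> int \<Rightarrow> letter list set" where
  "Hc p q = (\<Union>g\<in>carrier free_grp. (\<lambda>r. g \<otimes>\<^bsub>free_grp\<^esub> r \<otimes>\<^bsub>free_grp\<^esub> inv\<^bsub>free_grp\<^esub> g) ` relators p q)"

lemma N0_def: "normal_closure free_grp (relators p q) = generate free_grp (Hc p q)"
  by (simp add: normal_closure_def Hc_def)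

lemma relators_reduced: "r \<in> relators p q \<Longrightarrow> r \<in> carrier free_grp"
  by (auto simp: relators_def free_carrier)

lemma Hc_carrier: "Hc p q \<subseteq> carrier free_grp"
proof -
  interpret F: group free_grp by (rule group_free)
  show ?thesis unfolding Hc_def using relators_reduced by auto
qed

lemma relators_Hc: "r \<in> relators p q \<Longrightarrow> r \<in> Hc p q"
proof -
  interpret F: group free_grp by (rule group_free)
  assume r: "r \<in> relators p q"
  then have "r = \<one>\<^bsub>free_grp\<^esub> \<otimes>\<^bsub>free_grp\<^esub> r \<otimes>\<^bsub>free_grp\<^esub> inv\<^bsub>free_grp\<^esub> \<one>\<^bsub>free_grp\<^esub>"
    using relators_reduced[OF r] by simp
  then show ?thesis unfolding Hc_def using r by blast
qed

lemma ev_inv_word_id: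
  assumes "q \<noteq> 0" "ev p q w = id" shows "ev p q (inv_word w) = id"
proof -
  have "ev p q (inv_word w) = ev p q (inv_word w @ w)" using assms(2) by simp
  also have "\<dots> = ev p q (reduce (inv_word w @ w))" using assms(1) by (simp add: ev_reduce)
  finally show ?thesis by (simp add: reduce_inv_word_left)
qed

lemma ev_Hc:
  assumes q: "q \<noteq> 0" and h: "h \<in> Hc p q" shows "ev p q h = id"
proof -
  obtain g r where g: "g \<in> carrier free_grp" and r: "r \<in> relators p q"
    and hg: "h = g \<otimes>\<^bsub>free_grp\<^esub> r \<otimes>\<^bsub>free_grp\<^esub> inv\<^bsub>free_grp\<^esub> g"
    using h unfolding Hc_def by blast
  have gr: "reduced g" using g by (simp add: free_carrier)
  have "ev p q h = ev p q g \<circ> ev p q r \<circ> ev p q (inv_word g)"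
    unfolding hg using q gr by (simp add: free_mult free_inv ev_reduce comp_assoc)
  also have "\<dots> = ev p q (g @ inv_word g)" using ev_relators[OF q r] by simp
  also have "\<dots> = ev p q (reduce (g @ inv_word g))" using q by (simp add: ev_reduce)
  finally show ?thesis by (simp add: reduce_inv_word_right)
qed

lemma ev_N0:
  assumes q: "q \<noteq> 0" and w: "w \<in> normal_closure free_grp (relators p q)"
  shows "ev p q w = id"
  using w unfolding N0_def
proof (induction rule: generate.induct)
  case one then show ?case by (simp add: free_one)
next
  case (incl h) then show ?case using ev_Hc[OF q] by blast
next
  case (inv h)
  have "reduced h" using inv Hc_carrier by (auto simp: free_carrier)
  then show ?case using ev_Hc[OF q inv] q by (simp add: free_inv ev_reduce ev_inv_word_id)
next
  case (eng h1 h2) then show ?case using q by (simp add: free_mult ev_reduce)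
qed

lemma conj_Hc:
  assumes x: "x \<in> carrier free_grp" and h: "h \<in> Hc p q"
  shows "x \<otimes>\<^bsub>free_grp\<^esub> h \<otimes>\<^bsub>free_grp\<^esub> inv\<^bsub>free_grp\<^esub> x \<in> Hc p q"
proof -
  interpret F: group free_grp by (rule group_free)
  obtain g r where g: "g \<in> carrier free_grp" and r: "r \<in> relators p q"
    and hg: "h = g \<otimes>\<^bsub>free_grp\<^esub> r \<otimes>\<^bsub>free_grp\<^esub> inv\<^bsub>free_grp\<^esub> g"
    using h unfolding Hc_def by blast
  have rc: "r \<in> carrier free_grp" using relators_reduced[OF r] .
  have "x \<otimes>\<^bsub>free_grp\<^esub> h \<otimes>\<^bsub>free_grp\<^esub> inv\<^bsub>free_grp\<^esub> x
      = (x \<otimes>\<^bsub>free_grp\<^esub> g) \<otimes>\<^bsub>free_grp\<^esub> r \<otimes>\<^bsub>free_grp\<^esub> inv\<^bsub>free_grp\<^esub> (x \<otimes>\<^bsub>free_grp\<^esub> g)"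
    unfolding hg using x g rc by (simp add: F.inv_mult_group F.m_assoc)
  moreover have "x \<otimes>\<^bsub>free_grp\<^esub> g \<in> carrier free_grp" using x g by simp
  ultimately show ?thesis unfolding Hc_def using r by blast
qed

lemma N0_normal: "normal_closure free_grp (relators p q) \<lhd> free_grp"
proof -
  interpret F: group free_grp by (rule group_free)
  have sub: "subgroup (generate free_grp (Hc p q)) free_grp"
    by (rule F.generate_is_subgroup[OF Hc_carrier])
  have gc: "generate free_grp (Hc p q) \<subseteq> carrier free_grp"
    by (rule F.generate_incl[OF Hc_carrier])
  have "x \<otimes>\<^bsub>free_grp\<^esub> h \<otimes>\<^bsub>free_grp\<^esub> inv\<^bsub>free_grp\<^esub> x \<in> generate free_grp (Hc p q)"
    if x: "x \<in> carrier free_grp" and h: "h \<in> generate free_grp (Hc p q)" for x h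
    using h
  proof (induction rule: generate.induct)
    case one
    then show ?case using x by (simp add: generate.one)
  next
    case (incl h)
    then show ?case using conj_Hc[OF x] by (blast intro: generate.incl)
  next
    case (inv h)
    have hc: "h \<in> carrier free_grp" using inv Hc_carrier by blast
    have "x \<otimes>\<^bsub>free_grp\<^esub> inv\<^bsub>free_grp\<^esub> h \<otimes>\<^bsub>free_grp\<^esub> inv\<^bsub>free_grp\<^esub> x
        = inv\<^bsub>free_grp\<^esub> (x \<otimes>\<^bsub>free_grp\<^esub> h \<otimes>\<^bsub>free_grp\<^esub> inv\<^bsub>free_grp\<^esub> x)"
      using x hc by (simp add: F.inv_mult_group F.m_assoc)
    then show ?case using conj_Hc[OF x inv] by (simp add: generate.inv)
  next
    case (eng h1 h2)
    have c1: "h1 \<in> carrier free_grp" and c2: "h2 \<in> carrier free_grp" using eng gc by blast+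
    have "x \<otimes>\<^bsub>free_grp\<^esub> (h1 \<otimes>\<^bsub>free_grp\<^esub> h2) \<otimes>\<^bsub>free_grp\<^esub> inv\<^bsub>free_grp\<^esub> x
        = (x \<otimes>\<^bsub>free_grp\<^esub> h1 \<otimes>\<^bsub>free_grp\<^esub> inv\<^bsub>free_grp\<^esub> x) \<otimes>\<^bsub>free_grp\<^esub> (x \<otimes>\<^bsub>free_grp\<^esub> h2 \<otimes>\<^bsub>free_grp\<^esub> inv\<^bsub>free_grp\<^esub> x)"
      using x c1 c2 by (simp add: F.m_assoc F.inv_mult_group F.m_assoc[symmetric, of "inv\<^bsub>free_grp\<^esub> x" x])
    then show ?case using eng by (simp add: generate.eng)
  qed
  then show ?thesis unfolding N0_def using F.normal_inv_iff sub by blast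
qed

section \<open>Every finite quotient kills the element\<close>

lemma (in group) rel_comm:
  assumes "a \<in> carrier G" "b \<in> carrier G" "inv a \<otimes> (inv b \<otimes> (a \<otimes> (b \<otimes> \<one>))) = \<one>"
  shows "a \<otimes> b = b \<otimes> a"
proof -
  have "inv (b \<otimes> a) \<otimes> (a \<otimes> b) = \<one>" using assms by (simp add: inv_mult_group m_assoc)
  then have "inv (a \<otimes> b) = inv (b \<otimes> a)" using assms by (intro inv_equality) simp_all
  then have "inv (inv (a \<otimes> b)) = inv (inv (b \<otimes> a))" by simp
  then show ?thesis using assms by simp
qed

lemma (in group) rel_conj:
  assumes "s \<in> carrier G" "a \<in> carrier G" "c \<in> carrier G" "inv s \<otimes> (a \<otimes> (s \<otimes> inv c)) = \<one>"
  shows "inv s \<otimes> a \<otimes> s = c"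
proof -
  have "(inv s \<otimes> a \<otimes> s) \<otimes> inv c = \<one>" using assms by (simp add: m_assoc)
  then show ?thesis using inv_solve_right'[of \<one> "inv s \<otimes> a \<otimes> s" c] assms by simp
qed

lemma (in group) rel_u0:
  assumes c: "s \<in> carrier G" "a \<in> carrier G" "A \<in> carrier G"
    and comm: "(inv s \<otimes> A \<otimes> s) \<otimes> a = a \<otimes> (inv s \<otimes> A \<otimes> s)"
  shows "inv s \<otimes> (A \<otimes> (s \<otimes> (a \<otimes> (inv s \<otimes> (inv A \<otimes> (s \<otimes> (inv a \<otimes> \<one>))))))) = \<one>"
proof -
  define C where "C = inv s \<otimes> A \<otimes> s"
  have Cc: "C \<in> carrier G" using c by (simp add: C_def)
  have iC: "inv C = inv s \<otimes> inv A \<otimes> s" using c by (simp add: C_def inv_mult_group m_assoc)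
  have "inv s \<otimes> (A \<otimes> (s \<otimes> (a \<otimes> (inv s \<otimes> (inv A \<otimes> (s \<otimes> (inv a \<otimes> \<one>)))))))
      = (C \<otimes> a) \<otimes> (inv C \<otimes> inv a)" unfolding iC unfolding C_def using c by (simp add: m_assoc)
  also have "\<dots> = (a \<otimes> C) \<otimes> (inv C \<otimes> inv a)" using comm by (simp add: C_def)
  also have "\<dots> = a \<otimes> (C \<otimes> (inv C \<otimes> inv a))" using c Cc by (simp add: m_assoc)
  also have "C \<otimes> (inv C \<otimes> inv a) = inv a" using c Cc by (simp add: m_assoc[symmetric])
  also have "a \<otimes> inv a = \<one>" using c by simp
  finally show ?thesis .
qed

lemma key_fin:
  fixes p q :: int
  assumes q: "q \<noteq> 0" and M: "M \<lhd> G_pq p q" and fin: "finite (rcosets\<^bsub>G_pq p q\<^esub> M)"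
  shows "normal_closure free_grp (relators p q) #>\<^bsub>free_grp\<^esub> reduce (u0 (gcd q (2 * p))) \<in> M"
proof -
  define N where "N = normal_closure free_grp (relators p q)"
  define GP where "GP = G_pq p q"
  have GPd: "GP = free_grp Mod N" unfolding GP_def N_def G_pq_def ..
  interpret Fr: group free_grp by (rule group_free)
  interpret NN: normal N free_grp unfolding N_def by (rule N0_normal)
  interpret GPg: group GP unfolding GPd by (rule NN.factorgroup_is_group)
  interpret MM: normal M GP using M unfolding GP_def .
  define F where "F = GP Mod M"
  interpret FF: group F unfolding F_def by (rule MM.factorgroup_is_group)
  have finF: "finite (carrier F)" using fin unfolding F_def GP_def FactGroup_def by simp
  define \<pi> where "\<pi> = (\<lambda>a. M #>\<^bsub>GP\<^esub> a) \<circ> (\<lambda>a. N #>\<^bsub>free_grp\<^esub> a)"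
  have h1: "(\<lambda>a. N #>\<^bsub>free_grp\<^esub> a) \<in> hom free_grp GP"
    using NN.r_coset_hom_Mod unfolding GPd .
  have \<pi>h: "\<pi> \<in> hom free_grp F" unfolding \<pi>_def F_def
    by (rule hom_compose[OF h1 MM.r_coset_hom_Mod])
  interpret h: group_hom free_grp F \<pi>
    using \<pi>h by (simp add: group_hom_def group_hom_axioms_def Fr.is_group FF.is_group)
  define \<phi> where "\<phi> w = \<pi> (reduce w)" for w
  define img where "img l = (if snd l then inv\<^bsub>F\<^esub> (\<pi> [(fst l, False)]) else \<pi> [(fst l, False)])" for l
  have img_c: "img l \<in> carrier F" for l by (simp add: img_def free_carrier)
  have \<phi>_c: "\<phi> w \<in> carrier F" for w by (simp add: \<phi>_def free_carrier)
  have \<phi>_Nil: "\<phi> [] = \<one>\<^bsub>F\<^esub>"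
    unfolding \<phi>_def using h.hom_one by (simp add: reduce_def free_one)
  have pil: "\<pi> [l] = img l" for l
  proof (cases "snd l")
    case True
    obtain g where l: "l = (g, True)" using True by (cases l) auto
    have "[l] = inv\<^bsub>free_grp\<^esub> [(g, False)]"
      by (simp add: free_inv l inv_word_def reduce_reduced)
    then show ?thesis unfolding img_def using l by (simp add: free_carrier)
  next
    case False then show ?thesis by (cases l) (simp add: img_def)
  qed
  have \<phi>_Cons: "\<phi> (l # w) = img l \<otimes>\<^bsub>F\<^esub> \<phi> w" for l w
  proof -
    have "reduce (l # w) = [l] \<otimes>\<^bsub>free_grp\<^esub> reduce w"
      using reduce_reduce_right[of "[l]" w] by (simp add: free_mult)
    then show ?thesis unfolding \<phi>_def using pil by (simp add: free_carrier)
  qed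
  have \<phi>_app: "\<phi> (u @ w) = \<phi> u \<otimes>\<^bsub>F\<^esub> \<phi> w" for u w
    by (induction u) (simp_all add: \<phi>_Nil \<phi>_Cons \<phi>_c img_c FF.m_assoc)
  have \<phi>_red: "\<phi> (reduce w) = \<phi> w" for w
    by (simp add: \<phi>_def reduce_reduced)
  define \<alpha> where "\<alpha> = \<pi> [(GA, False)]"
  define \<beta> where "\<beta> = \<pi> [(GB, False)]"
  define \<sigma> where "\<sigma> = \<pi> [(GS, False)]"
  define \<tau> where "\<tau> = \<pi> [(GT, False)]"
  have cs: "\<alpha> \<in> carrier F" "\<beta> \<in> carrier F" "\<sigma> \<in> carrier F" "\<tau> \<in> carrier F"
    by (simp_all add: \<alpha>_def \<beta>_def \<sigma>_def \<tau>_def free_carrier)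
  have imgs: "img (GA, False) = \<alpha>" "img (GA, True) = inv\<^bsub>F\<^esub> \<alpha>"
    "img (GB, False) = \<beta>" "img (GB, True) = inv\<^bsub>F\<^esub> \<beta>"
    "img (GS, False) = \<sigma>" "img (GS, True) = inv\<^bsub>F\<^esub> \<sigma>"
    "img (GT, False) = \<tau>" "img (GT, True) = inv\<^bsub>F\<^esub> \<tau>"
    by (simp_all add: img_def \<alpha>_def \<beta>_def \<sigma>_def \<tau>_def)
  have \<phi>_rep: "\<phi> (replicate n l) = img l [^]\<^bsub>F\<^esub> n" for n l
  proof (induction n)
    case 0 then show ?case by (simp add: \<phi>_Nil)
  next
    case (Suc n)
    have "\<phi> (replicate (Suc n) l) = img l \<otimes>\<^bsub>F\<^esub> img l [^]\<^bsub>F\<^esub> n" using Suc by (simp add: \<phi>_Cons)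
    also have "\<dots> = img l [^]\<^bsub>F\<^esub> (Suc n)" by (rule FF.nat_pow_Suc2[OF img_c, symmetric])
    finally show ?case .
  qed
  have \<phi>_gpow: "\<phi> (gpow GA k) = \<alpha> [^]\<^bsub>F\<^esub> k" for k
  proof (cases "0 \<le> k")
    case True
    then have "\<phi> (gpow GA k) = \<alpha> [^]\<^bsub>F\<^esub> (nat k)" by (simp add: gpow_def \<phi>_rep imgs)
    also have "\<dots> = \<alpha> [^]\<^bsub>F\<^esub> k" using int_pow_int[of F \<alpha> "nat k"] True by simp
    finally show ?thesis .
  next
    case False
    then have "\<phi> (gpow GA k) = (inv\<^bsub>F\<^esub> \<alpha>) [^]\<^bsub>F\<^esub> (nat (- k))" by (simp add: gpow_def \<phi>_rep imgs)
    also have "\<dots> = inv\<^bsub>F\<^esub> (\<alpha> [^]\<^bsub>F\<^esub> (nat (- k)))" by (rule FF.nat_pow_inv[OF cs(1)])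
    also have "\<dots> = \<alpha> [^]\<^bsub>F\<^esub> k" using FF.int_pow_neg_int[OF cs(1), of "nat (- k)"] False by simp
    finally show ?thesis .
  qed
  have \<phi>_inv_word: "\<phi> (inv_word w) = inv\<^bsub>F\<^esub> (\<phi> w)" for w
  proof -
    have "\<phi> (inv_word w) \<otimes>\<^bsub>F\<^esub> \<phi> w = \<one>\<^bsub>F\<^esub>"
      using \<phi>_app[of "inv_word w" w] \<phi>_red[of "inv_word w @ w"] \<phi>_Nil
      by (simp add: reduce_inv_word_left)
    then show ?thesis using \<phi>_c by (intro FF.inv_equality[symmetric]) simp_all
  qed
  have \<phi>_rel: "\<phi> r = \<one>\<^bsub>F\<^esub>" if r: "r \<in> relators p q" for r
  proof -
    have rN: "r \<in> N" unfolding N_def N0_def using relators_Hc[OF r] by (rule generate.incl)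
    have rr: "reduce r = r" using relators_reduced[OF r] by (simp add: free_carrier reduce_reduced)
    have "N #>\<^bsub>free_grp\<^esub> r = N" by (rule NN.rcos_const[OF Fr.is_group rN])
    moreover have "M #>\<^bsub>GP\<^esub> N = M"
      using GPg.coset_mult_one[OF MM.subset] unfolding GPd by (simp add: FactGroup_def)
    ultimately show ?thesis unfolding \<phi>_def \<pi>_def rr by (simp add: F_def FactGroup_def)
  qed
  have R1: "\<phi> [(GA, True), (GB, True), (GA, False), (GB, False)] = \<one>\<^bsub>F\<^esub>"
    using \<phi>_rel[of "reduce [(GA, True), (GB, True), (GA, False), (GB, False)]"] \<phi>_red
    by (simp add: relators_def)
  have ab: "\<alpha> \<otimes>\<^bsub>F\<^esub> \<beta> = \<beta> \<otimes>\<^bsub>F\<^esub> \<alpha>"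
    using R1 by (intro FF.rel_comm cs) (simp add: \<phi>_Cons \<phi>_Nil imgs)
  have R2: "\<phi> ([(GS, True)] @ gpow GA q @ [(GS, False)] @ inv_word (gpow GA p @ [(GB, False)])) = \<one>\<^bsub>F\<^esub>"
    using \<phi>_rel[of "reduce ([(GS, True)] @ gpow GA q @ [(GS, False)] @ inv_word (gpow GA p @ [(GB, False)]))"] \<phi>_red
    by (simp add: relators_def)
  have r2: "inv\<^bsub>F\<^esub> \<sigma> \<otimes>\<^bsub>F\<^esub> \<alpha> [^]\<^bsub>F\<^esub> q \<otimes>\<^bsub>F\<^esub> \<sigma> = \<alpha> [^]\<^bsub>F\<^esub> p \<otimes>\<^bsub>F\<^esub> \<beta>"
    using R2 cs by (intro FF.rel_conj) (simp_all add: \<phi>_app \<phi>_Cons \<phi>_Nil imgs \<phi>_gpow \<phi>_inv_word)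
  have R3: "\<phi> ([(GT, True)] @ gpow GA q @ [(GT, False)] @ inv_word (gpow GA p @ [(GB, True)])) = \<one>\<^bsub>F\<^esub>"
    using \<phi>_rel[of "reduce ([(GT, True)] @ gpow GA q @ [(GT, False)] @ inv_word (gpow GA p @ [(GB, True)]))"] \<phi>_red
    by (simp add: relators_def)
  have r3: "inv\<^bsub>F\<^esub> \<tau> \<otimes>\<^bsub>F\<^esub> \<alpha> [^]\<^bsub>F\<^esub> q \<otimes>\<^bsub>F\<^esub> \<tau> = \<alpha> [^]\<^bsub>F\<^esub> p \<otimes>\<^bsub>F\<^esub> inv\<^bsub>F\<^esub> \<beta>"
    using R3 cs by (intro FF.rel_conj) (simp_all add: \<phi>_app \<phi>_Cons \<phi>_Nil imgs \<phi>_gpow \<phi>_inv_word)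
  define g where "g = gcd q (2 * p)"
  have comm: "(inv\<^bsub>F\<^esub> \<sigma> \<otimes>\<^bsub>F\<^esub> \<alpha> [^]\<^bsub>F\<^esub> g \<otimes>\<^bsub>F\<^esub> \<sigma>) \<otimes>\<^bsub>F\<^esub> \<alpha> = \<alpha> \<otimes>\<^bsub>F\<^esub> (inv\<^bsub>F\<^esub> \<sigma> \<otimes>\<^bsub>F\<^esub> \<alpha> [^]\<^bsub>F\<^esub> g \<otimes>\<^bsub>F\<^esub> \<sigma>)"
    unfolding g_def by (rule FF.fin_key[OF finF cs ab r2 r3])
  have "\<phi> (u0 g) = \<one>\<^bsub>F\<^esub>"
    unfolding u0_def using FF.rel_u0[OF cs(3,1) FF.int_pow_closed[OF cs(1)] comm]
    by (simp add: \<phi>_app \<phi>_Cons \<phi>_Nil imgs \<phi>_gpow FF.int_pow_neg cs)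
  then have "M #>\<^bsub>GP\<^esub> (N #>\<^bsub>free_grp\<^esub> reduce (u0 g)) = M"
    unfolding \<phi>_def \<pi>_def by (simp add: F_def FactGroup_def)
  moreover have "N #>\<^bsub>free_grp\<^esub> reduce (u0 g) \<in> carrier GP"
    using h1 by (auto simp: hom_def free_carrier)
  ultimately have "N #>\<^bsub>free_grp\<^esub> reduce (u0 g) \<in> M"
    using GPg.rcos_self[OF _ MM.subgroup_axioms] by metis
  then show ?thesis unfolding N_def g_def .
qed

theorem theorem3p3:
  fixes p q :: int
  assumes "p \<noteq> 0" and "q \<noteq> 0" and "\<not> q dvd 2 * p"
  shows "\<not> residually_finite (G_pq p q)"
proof
  assume rf: "residually_finite (G_pq p q)"
  have q: "q \<noteq> 0" by fact
  define N where "N = normal_closure free_grp (relators p q)"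
  define g where "g = gcd q (2 * p)"
  define w0 where "w0 = reduce (u0 g)"
  define x where "x = N #>\<^bsub>free_grp\<^esub> w0"
  interpret Fr: group free_grp by (rule group_free)
  interpret NN: normal N free_grp unfolding N_def by (rule N0_normal)
  have g0: "0 < g" unfolding g_def using q by simp
  have "g dvd \<bar>q\<bar>" unfolding g_def by simp
  then have gle: "g \<le> \<bar>q\<bar>" using q by (simp add: zdvd_imp_le)
  have "g \<noteq> \<bar>q\<bar>"
  proof
    assume "g = \<bar>q\<bar>"
    then have "\<bar>q\<bar> dvd 2 * p" unfolding g_def by (metis gcd_dvd2)
    then show False using assms(3) by simp
  qed
  then have gq: "g < \<bar>q\<bar>" using gle by simp
  have w0c: "w0 \<in> carrier free_grp" by (simp add: w0_def free_carrier)
  have xc: "x \<in> carrier (G_pq p q)"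
    unfolding x_def G_pq_def N_def[symmetric] FactGroup_def RCOSETS_def using w0c by auto
  have x1: "x \<noteq> \<one>\<^bsub>G_pq p q\<^esub>"
  proof
    assume "x = \<one>\<^bsub>G_pq p q\<^esub>"
    then have "x = N" unfolding G_pq_def N_def[symmetric] FactGroup_def by simp
    then have "w0 \<in> N" using Fr.rcos_self[OF w0c NN.subgroup_axioms] unfolding x_def by simp
    then have "ev p q w0 = id" unfolding N_def using ev_N0[OF q] by blast
    then have "ev p q (u0 g) = id" unfolding w0_def using q by (simp add: ev_reduce)
    then show False using ev_u0[OF q g0 gq] by simp
  qed
  obtain M where M: "M \<lhd> G_pq p q" "finite (rcosets\<^bsub>G_pq p q\<^esub> M)" "x \<notin> M"
    using rf xc x1 unfolding residually_finite_def by blast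
  have "x \<in> M" using key_fin[OF q M(1,2)] unfolding x_def w0_def N_def g_def .
  then show False using M(3) by simp
qed

end
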